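(* Consider two patches with $p=d_{12}\in(0,1)$, $q=d_{21}\in(0,1)$ and a random environment $(w_n)_{n\ge0}$ which is a stationary Markov chain on $\{e_1,e_2\}$ with $\mathbb P(w_{n+1}=e_2\mid w_n=e_1)=\alpha\in(0,1]$ and $\mathbb P(w_{n+1}=e_1\mid w_n=e_2)=\beta\in(0,1]$, so that $\nu:=\beta/(\alpha+\beta)$ is the stationary probability of $e_1$. Let $M_1=m_1(e_1)>0$ and $m_2=m_2(e_2)>0$, all other means being positive and finite. Then the Lyapunov exponent $$\gamma=\lim_{n\to\infty}\frac1n\log\|A(w_n)A(w_{n-1})\cdots A(w_0)\|$$ (which exists a.s. and is deterministic) satisfies $$ \gamma\ge \nu\log M_1+(1-\nu)\log m_2+\nu\alpha\log(pq)+\nu(1-\alpha)\log(1-p)+(1-\nu)(1-\beta)\log(1-q). $$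
   Context: For an environment state $w$, $m_i(w)$ is the mean offspring number of an individual living in patch $i$ and $A(w)$ is the $2\times2$ mean offspring matrix $A(w)_{ij}=m_i(w)d_{ij}$, with $d_{11}=1-p$, $d_{12}=p$, $d_{21}=q$, $d_{22}=1-q$. $\|\cdot\|$ denotes the maximum row sum norm. The environment affects all patches simultaneously at each generation, and the population process is a multitype branching process in random environment whose growth rate satisfies $\log\rho=\gamma$. *)

theory Defs
  imports "HOL-Probability.Probability"
begin

datatype env = E1 | E2

definition dmat :: "real \<Rightarrow> real \<Rightarrow> real^2^2" where
  "dmat p q = (\<chi> i j. if i = 1 then (if j = 1 then 1 - p else p)
                         else (if j = 1 then q else 1 - q))"

definition Amat :: "(env \<Rightarrow> 2 \<Rightarrow> real) \<Rightarrow> real \<Rightarrow> real \<Rightarrow> env \<Rightarrow> real^2^2" where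
  "Amat m p q w = (\<chi> i j. m w i * dmat p q $ i $ j)"

fun prodA :: "(env \<Rightarrow> 2 \<Rightarrow> real) \<Rightarrow> real \<Rightarrow> real \<Rightarrow> (nat \<Rightarrow> env) \<Rightarrow> nat \<Rightarrow> real^2^2" where
  "prodA m p q w 0 = Amat m p q (w 0)"
| "prodA m p q w (Suc n) = Amat m p q (w (Suc n)) ** prodA m p q w n"

definition rownorm :: "real^2^2 \<Rightarrow> real" where
  "rownorm B = Max (range (\<lambda>i. \<Sum>j\<in>UNIV. \<bar>B $ i $ j\<bar>))"

definition init_law :: "real \<Rightarrow> real \<Rightarrow> env \<Rightarrow> real" where
  "init_law \<alpha> \<beta> s = (if s = E1 then \<beta> / (\<alpha> + \<beta>) else \<alpha> / (\<alpha> + \<beta>))"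

definition trans_prob :: "real \<Rightarrow> real \<Rightarrow> env \<Rightarrow> env \<Rightarrow> real" where
  "trans_prob \<alpha> \<beta> s t =
     (if s = E1 then (if t = E2 then \<alpha> else 1 - \<alpha>)
      else (if t = E1 then \<beta> else 1 - \<beta>))"

definition stationary_env_chain ::
  "'a measure \<Rightarrow> (nat \<Rightarrow> 'a \<Rightarrow> env) \<Rightarrow> real \<Rightarrow> real \<Rightarrow> bool" where
  "stationary_env_chain M w \<alpha> \<beta> \<longleftrightarrow>
     (\<forall>n. w n \<in> measurable M (count_space UNIV)) \<and>
     (\<forall>n (xs :: nat \<Rightarrow> env).
        measure M {\<omega> \<in> space M. \<forall>i\<le>n. w i \<omega> = xs i}
        = init_law \<alpha> \<beta> (xs 0) * (\<Prod>i<n. trans_prob \<alpha> \<beta> (xs i) (xs (Suc i))))"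

end

theory Submission
  imports Defs
begin

lemma env_UNIV: "(UNIV :: env set) = {E1, E2}"
  using env.exhaust by auto

lemma sum_env: "(\<Sum>y\<in>(UNIV::env set). f y) = f E1 + f E2"
  by (simp add: env_UNIV)

lemma finite_env[simp]: "finite (UNIV :: env set)"
  by (simp add: env_UNIV)

definition RR :: "nat \<Rightarrow> (nat \<Rightarrow> env) set" where
  "RR n = PiE {..n} (\<lambda>_. UNIV)"

definition cw :: "real \<Rightarrow> real \<Rightarrow> nat \<Rightarrow> (nat \<Rightarrow> env) \<Rightarrow> real" where
  "cw a b n xs = init_law a b (xs 0) * (\<Prod>i<n. trans_prob a b (xs i) (xs (Suc i)))"

definition ZZ :: "real \<Rightarrow> real \<Rightarrow> nat \<Rightarrow> ((nat \<Rightarrow> env) \<Rightarrow> real) \<Rightarrow> real" where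
  "ZZ a b n \<Phi> = (\<Sum>xs\<in>RR n. \<Phi> xs * cw a b n xs)"

lemma finite_RR: "finite (RR n)"
  unfolding RR_def by (intro finite_PiE) auto

lemma RR_Suc: "RR (Suc n) = (\<lambda>(y, g). g(Suc n := y)) ` (UNIV \<times> RR n)"
  unfolding RR_def atMost_Suc by (rule PiE_insert_eq)

lemma inj_RR_Suc: "inj_on (\<lambda>(y, g). g(Suc n := y)) (UNIV \<times> RR n)"
proof (rule inj_onI, clarsimp)
  fix y g y' g' assume g: "g \<in> RR n" and g': "g' \<in> RR n" and eq: "g(Suc n := y) = g'(Suc n := y')"
  have "y = y'" using fun_cong[OF eq, of "Suc n"] by simp
  moreover have "g = g'"
  proof (rule PiE_ext[OF g[unfolded RR_def] g'[unfolded RR_def]])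
    fix i assume "i \<in> {..n}" then show "g i = g' i" using fun_cong[OF eq, of i] by auto
  qed
  ultimately show "y = y' \<and> g = g'" by simp
qed

lemma cw_upd: "cw a b (Suc n) (g(Suc n := y)) = cw a b n g * trans_prob a b (g n) y"
proof -
  have "(\<Prod>i<n. trans_prob a b ((g(Suc n := y)) i) ((g(Suc n := y)) (Suc i)))
      = (\<Prod>i<n. trans_prob a b (g i) (g (Suc i)))"
    by (intro prod.cong) auto
  then show ?thesis unfolding cw_def by (simp add: prod.lessThan_Suc)
qed

lemma ZZ_Suc: "ZZ a b (Suc n) \<Phi> = ZZ a b n (\<lambda>g. \<Sum>y\<in>UNIV. trans_prob a b (g n) y * \<Phi> (g(Suc n := y)))"
proof -
  have "ZZ a b (Suc n) \<Phi> = (\<Sum>(y,g)\<in>UNIV \<times> RR n. \<Phi> (g(Suc n := y)) * cw a b (Suc n) (g(Suc n := y)))"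
    unfolding ZZ_def RR_Suc by (subst sum.reindex[OF inj_RR_Suc]) (simp add: case_prod_unfold)
  also have "\<dots> = (\<Sum>y\<in>UNIV. \<Sum>g\<in>RR n. \<Phi> (g(Suc n := y)) * cw a b (Suc n) (g(Suc n := y)))"
    by (subst sum.cartesian_product[symmetric]) simp
  also have "\<dots> = (\<Sum>g\<in>RR n. \<Sum>y\<in>UNIV. \<Phi> (g(Suc n := y)) * cw a b (Suc n) (g(Suc n := y)))"
    by (rule sum.swap)
  also have "\<dots> = ZZ a b n (\<lambda>g. \<Sum>y\<in>UNIV. trans_prob a b (g n) y * \<Phi> (g(Suc n := y)))"
    unfolding ZZ_def cw_upd by (intro sum.cong refl) (simp add: sum_distrib_left mult_ac)
  finally show ?thesis .
qed

lemma RR_0: "RR 0 = (\<lambda>y. (\<lambda>_. undefined)(0 := y)) ` UNIV"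
proof -
  have "x = (\<lambda>_. undefined)(0 := x 0)" if "\<forall>i>0. x i = undefined" for x :: "nat \<Rightarrow> env"
    using that by (intro ext) auto
  then show ?thesis unfolding RR_def by (auto simp: PiE_def extensional_def)
qed

lemma ZZ_0: "ZZ a b 0 \<Phi> = (\<Sum>y\<in>UNIV. init_law a b y * \<Phi> ((\<lambda>_. undefined)(0 := y)))"
proof -
  have "inj (\<lambda>y. ((\<lambda>_. undefined)(0 := y)) :: nat \<Rightarrow> env)"
    by (rule injI) (metis fun_upd_same)
  then show ?thesis unfolding ZZ_def RR_0 cw_def
    by (subst sum.reindex) (auto simp: mult_ac)
qed

lemma ZZ_add: "ZZ a b n (\<lambda>x. f x + g x) = ZZ a b n f + ZZ a b n g"
  unfolding ZZ_def by (simp add: sum.distrib distrib_right)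

lemma ZZ_cmult: "ZZ a b n (\<lambda>x. c * f x) = c * ZZ a b n f"
  unfolding ZZ_def by (simp add: sum_distrib_left mult_ac)

lemma ZZ_cong: "(\<And>x. f x = g x) \<Longrightarrow> ZZ a b n f = ZZ a b n g"
  by (simp add: ZZ_def)

lemma cw_nonneg: "0 \<le> a \<Longrightarrow> a \<le> 1 \<Longrightarrow> 0 < b \<Longrightarrow> b \<le> 1 \<Longrightarrow> 0 \<le> cw a b n xs"
  unfolding cw_def init_law_def trans_prob_def
  by (intro mult_nonneg_nonneg prod_nonneg) auto

lemma ZZ_mono: "0 \<le> a \<Longrightarrow> a \<le> 1 \<Longrightarrow> 0 < b \<Longrightarrow> b \<le> 1 \<Longrightarrow> (\<And>x. f x \<le> g x) \<Longrightarrow> ZZ a b n f \<le> ZZ a b n g"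
  unfolding ZZ_def by (intro sum_mono mult_right_mono cw_nonneg) auto

lemma ZZ_split: "ZZ a b n f = ZZ a b n (\<lambda>x. if x n = E1 then f x else 0) + ZZ a b n (\<lambda>x. if x n = E2 then f x else 0)"
  apply (subst ZZ_add[symmetric], rule ZZ_cong)
  subgoal for x by (cases "x n") simp_all
  done

lemma ZZ_Suc_last:
  "ZZ a b (Suc n) (\<lambda>x. if x (Suc n) = e then f x else 0)
   = trans_prob a b E1 e * ZZ a b n (\<lambda>x. if x n = E1 then f (x(Suc n := e)) else 0)
   + trans_prob a b E2 e * ZZ a b n (\<lambda>x. if x n = E2 then f (x(Suc n := e)) else 0)"
proof -
  have "ZZ a b (Suc n) (\<lambda>x. if x (Suc n) = e then f x else 0)
     = ZZ a b n (\<lambda>g. trans_prob a b (g n) e * f (g(Suc n := e)))"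
    by (subst ZZ_Suc, rule ZZ_cong) (cases e; simp add: sum_env)
  also have "\<dots> = ZZ a b n (\<lambda>x. trans_prob a b E1 e * (if x n = E1 then f (x(Suc n := e)) else 0))
                + ZZ a b n (\<lambda>x. trans_prob a b E2 e * (if x n = E2 then f (x(Suc n := e)) else 0))"
    by (subst ZZ_split) (intro arg_cong2[where f="(+)"] ZZ_cong; simp)
  finally show ?thesis by (simp add: ZZ_cmult)
qed


definition FF :: "(env \<Rightarrow> env \<Rightarrow> real) \<Rightarrow> nat \<Rightarrow> (nat \<Rightarrow> env) \<Rightarrow> real" where
  "FF g n x = (\<Sum>t<n. g (x t) (x (Suc t)))"

lemma FF_upd: "FF g (Suc n) (x(Suc n := e)) = FF g n x + g (x n) e"
proof -
  have "(\<Sum>t<n. g ((x(Suc n := e)) t) ((x(Suc n := e)) (Suc t))) = (\<Sum>t<n. g (x t) (x (Suc t)))"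
    by (intro sum.cong) auto
  then show ?thesis unfolding FF_def by simp
qed

lemma FF_0[simp]: "FF g 0 x = 0" by (simp add: FF_def)

definition WW where "WW a b n e = ZZ a b n (\<lambda>x. if x n = e then 1 else 0)"

lemma ZZ_lin: "ZZ a b n (\<lambda>x. if x n = e then u x + k else 0)
   = ZZ a b n (\<lambda>x. if x n = e then u x else 0) + k * WW a b n e"
  unfolding WW_def by (subst ZZ_cmult[symmetric], subst ZZ_add[symmetric], rule ZZ_cong) simp

lemma ZZ_sq: "ZZ a b n (\<lambda>x. if x n = e then (u x + k)\<^sup>2 else 0)
   = ZZ a b n (\<lambda>x. if x n = e then (u x)\<^sup>2 else 0) + 2 * k * ZZ a b n (\<lambda>x. if x n = e then u x else 0)
     + k\<^sup>2 * WW a b n e"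
proof -
  have "ZZ a b n (\<lambda>x. if x n = e then (u x + k)\<^sup>2 else 0)
     = ZZ a b n (\<lambda>x. (if x n = e then (u x)\<^sup>2 else 0) + ((2 * k) * (if x n = e then u x else 0) + k\<^sup>2 * (if x n = e then 1 else 0)))"
    by (rule ZZ_cong) (simp add: power2_eq_square algebra_simps)
  then show ?thesis unfolding WW_def ZZ_add ZZ_cmult by simp
qed

lemma stat_E1: "(a::real) + b \<noteq> 0 \<Longrightarrow> (1-a)*(b/(a+b)) + b*(a/(a+b)) = b/(a+b)"
proof -
  have "(1-a)*(b/(a+b)) + b*(a/(a+b)) = ((1-a)*b + b*a)/(a+b)" by (simp only: times_divide_eq_right add_divide_distrib)
  also have "(1-a)*b + b*a = b" by (simp add: algebra_simps)
  finally show ?thesis .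
qed

lemma stat_E2: "(a::real) + b \<noteq> 0 \<Longrightarrow> a*(b/(a+b)) + (1-b)*(a/(a+b)) = a/(a+b)"
proof -
  have "a*(b/(a+b)) + (1-b)*(a/(a+b)) = (a*b + (1-b)*a)/(a+b)" by (simp only: times_divide_eq_right add_divide_distrib)
  also have "a*b + (1-b)*a = a" by (simp add: algebra_simps)
  finally show ?thesis .
qed

lemma WW_stat:
  assumes "0 < a" "a \<le> 1" "0 < b" "b \<le> 1"
  shows "WW a b n e = init_law a b e"
proof (induction n arbitrary: e)
  case 0
  then show ?case unfolding WW_def ZZ_0 by (cases e) (simp_all add: sum_env)
next
  case (Suc n)
  have ab: "a + b \<noteq> 0" using assms by simp
  have "WW a b (Suc n) e = trans_prob a b E1 e * WW a b n E1 + trans_prob a b E2 e * WW a b n E2"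
    unfolding WW_def by (subst ZZ_Suc_last) simp
  also have "\<dots> = init_law a b e"
    unfolding Suc init_law_def trans_prob_def using stat_E1[OF ab] stat_E2[OF ab] by (cases e) simp_all
  finally show ?case .
qed


locale mc =
  fixes a b :: real and g :: "env \<Rightarrow> env \<Rightarrow> real" and c :: real
  assumes a0: "0 < a" and a1: "a \<le> 1" and b0: "0 < b" and b1: "b \<le> 1"
    and hc: "c = (\<Sum>u\<in>UNIV. \<Sum>e\<in>UNIV. init_law a b u * trans_prob a b u e * g u e)"
begin

abbreviation "\<nu>1 \<equiv> init_law a b E1"
abbreviation "\<nu>2 \<equiv> init_law a b E2"

lemma ab_ne: "a + b \<noteq> 0" using a0 b0 by simp

lemma nu_sum: "\<nu>1 + \<nu>2 = 1"
  using ab_ne by (simp add: init_law_def add_divide_distrib[symmetric] add.commute)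

lemma sz: "(1-a)*(g E1 E1 - c)*\<nu>1 + a*(g E1 E2 - c)*\<nu>1 + b*(g E2 E1 - c)*\<nu>2 + (1-b)*(g E2 E2 - c)*\<nu>2 = 0"
proof -
  have "c = (1-a)*g E1 E1*\<nu>1 + a*g E1 E2*\<nu>1 + b*g E2 E1*\<nu>2 + (1-b)*g E2 E2*\<nu>2"
    unfolding hc by (simp add: sum_env trans_prob_def mult_ac)
  then show ?thesis using nu_sum by algebra
qed

definition DD where "DD n e = ZZ a b n (\<lambda>x. if x n = e then FF g n x - real n * c else 0)"
definition VV where "VV n e = ZZ a b n (\<lambda>x. if x n = e then (FF g n x - real n * c)\<^sup>2 else 0)"

lemma W: "WW a b n e = init_law a b e"
  using WW_stat a0 a1 b0 b1 by blast

lemma shift: "(\<lambda>x. if x n = u then h (FF g (Suc n) (x(Suc n := e)) - real (Suc n) * c) else 0)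
   = (\<lambda>x. if x n = u then h ((FF g n x - real n * c) + (g u e - c)) else 0)"
  by (rule ext) (simp add: FF_upd algebra_simps)

lemma DD_Suc: "DD (Suc n) e = trans_prob a b E1 e * (DD n E1 + (g E1 e - c) * init_law a b E1)
   + trans_prob a b E2 e * (DD n E2 + (g E2 e - c) * init_law a b E2)"
  unfolding DD_def
  apply (subst ZZ_Suc_last)
  using shift[where h="\<lambda>x. x"] ZZ_lin W by simp

lemma VV_Suc: "VV (Suc n) e = trans_prob a b E1 e * (VV n E1 + 2 * (g E1 e - c) * DD n E1 + (g E1 e - c)\<^sup>2 * init_law a b E1)
   + trans_prob a b E2 e * (VV n E2 + 2 * (g E2 e - c) * DD n E2 + (g E2 e - c)\<^sup>2 * init_law a b E2)"
  unfolding DD_def VV_def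
  apply (subst ZZ_Suc_last)
  using shift[where h="\<lambda>x. x\<^sup>2"] ZZ_sq W by simp

definition "kk = (1-a)*(g E1 E1 - c)*\<nu>1 + b*(g E2 E1 - c)*\<nu>2"

lemma DD_closed: "DD n E1 = kk * (1 - (1-a-b)^n) / (a+b) \<and> DD n E2 = - DD n E1"
proof (induction n)
  case 0
  then show ?case unfolding DD_def ZZ_0 by (simp add: sum_env)
next
  case (Suc n)
  have ab: "a + b \<noteq> 0" using a0 b0 by simp
  have 1: "DD (Suc n) E1 = (1-a) * (DD n E1 + (g E1 E1 - c) * \<nu>1) + b * (DD n E2 + (g E2 E1 - c) * \<nu>2)"
    by (subst DD_Suc) (simp add: trans_prob_def init_law_def)
  have 2: "DD (Suc n) E2 = a * (DD n E1 + (g E1 E2 - c) * \<nu>1) + (1-b) * (DD n E2 + (g E2 E2 - c) * \<nu>2)"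
    by (subst DD_Suc) (simp add: trans_prob_def init_law_def)
  define K where "K = kk * (1 - (1-a-b)^n) / (a+b)"
  have IH1: "DD n E1 = K" and IH2: "DD n E2 = - K" using Suc.IH K_def by auto
  have "DD (Suc n) E1 = (1-a-b) * K + kk"
    unfolding 1 IH1 IH2 by (simp add: kk_def algebra_simps)
  also have "\<dots> = kk * (1 - (1-a-b)^Suc n) / (a+b)"
    using ab unfolding K_def by (simp add: field_simps power_Suc)
  finally have "DD (Suc n) E1 = kk * (1 - (1-a-b)^Suc n) / (a+b)" .
  moreover have "DD (Suc n) E2 = - DD (Suc n) E1"
    unfolding 1 2 IH1 IH2 using sz by algebra
  ultimately show ?case by simp
qed


definition Dbound :: real where "Dbound = 2 * \<bar>kk\<bar> / (a + b)"

lemma DD_bound: "\<bar>DD n e\<bar> \<le> Dbound"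
proof -
  have ab: "0 < a + b" using a0 b0 by simp
  have "\<bar>1 - a - b\<bar> \<le> 1" using a0 b0 a1 b1 by simp
  then have p: "\<bar>(1-a-b)^n\<bar> \<le> 1" by (simp add: power_abs power_le_one)
  have "\<bar>1 - (1-a-b)^n\<bar> \<le> 2" using p by linarith
  then have "\<bar>kk\<bar> * \<bar>1 - (1-a-b)^n\<bar> \<le> \<bar>kk\<bar> * 2"
    by (rule mult_left_mono) auto
  then have k: "\<bar>kk * (1 - (1-a-b)^n)\<bar> \<le> 2 * \<bar>kk\<bar>"
    unfolding abs_mult by linarith
  have d: "DD n E1 = kk * (1 - (1-a-b)^n) / (a+b)" using DD_closed by blast
  have "\<bar>DD n E1\<bar> = \<bar>kk * (1 - (1-a-b)^n)\<bar> / (a+b)" unfolding d abs_divide using ab by simp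
  also have "\<dots> \<le> 2 * \<bar>kk\<bar> / (a+b)" by (rule divide_right_mono[OF k less_imp_le[OF ab]])
  finally have e1: "\<bar>DD n E1\<bar> \<le> Dbound" unfolding Dbound_def .
  have d2: "DD n E2 = - DD n E1" using DD_closed by blast
  show ?thesis using e1 by (cases e) (simp_all add: d2)
qed

lemma VV_nonneg: "0 \<le> VV n e"
proof -
  have "ZZ a b n (\<lambda>x. 0) \<le> VV n e"
    unfolding VV_def using a0 a1 b0 b1 by (intro ZZ_mono) auto
  then show ?thesis by (simp add: ZZ_def)
qed

definition KV :: real where "KV = (\<Sum>u\<in>UNIV. \<Sum>e\<in>UNIV. 2 * \<bar>g u e - c\<bar> * Dbound + (g u e - c)\<^sup>2)"

lemma term_bound:
  assumes "0 \<le> t" "t \<le> 1" "0 \<le> v" "v \<le> 1" "\<bar>D\<bar> \<le> Dbound"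
  shows "t * (2 * (h - c) * D + (h - c)\<^sup>2 * v) \<le> 2 * \<bar>h - c\<bar> * Dbound + (h - c)\<^sup>2"
proof -
  have "\<bar>2 * (h - c) * D\<bar> = (2 * \<bar>h - c\<bar>) * \<bar>D\<bar>" by (simp only: abs_mult)
  also have "\<dots> \<le> 2 * \<bar>h - c\<bar> * Dbound"
    using assms(5) by (rule mult_left_mono) auto
  finally have "\<bar>2 * (h - c) * D\<bar> \<le> 2 * \<bar>h - c\<bar> * Dbound" .
  moreover have "(h - c)\<^sup>2 * v \<le> (h - c)\<^sup>2" using assms(3,4) by (simp add: mult_left_le)
  moreover have "0 \<le> (h - c)\<^sup>2 * v" using assms(3) by simp
  ultimately have x: "\<bar>2 * (h - c) * D + (h - c)\<^sup>2 * v\<bar> \<le> 2 * \<bar>h - c\<bar> * Dbound + (h - c)\<^sup>2"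
    by linarith
  have "t * (2 * (h - c) * D + (h - c)\<^sup>2 * v) \<le> t * \<bar>2 * (h - c) * D + (h - c)\<^sup>2 * v\<bar>"
    using assms(1) by (intro mult_left_mono) auto
  also have "\<dots> \<le> \<bar>2 * (h - c) * D + (h - c)\<^sup>2 * v\<bar>"
    using assms(1,2) by (simp add: mult_left_le_one_le)
  finally show ?thesis using x by linarith
qed

definition TT :: "nat \<Rightarrow> real" where "TT n = VV n E1 + VV n E2"

lemma TT_bound: "TT n \<le> KV * real n"
proof (induction n)
  case 0
  then show ?case unfolding TT_def VV_def ZZ_0 by (simp add: sum_env)
next
  case (Suc n)
  have nu: "0 \<le> \<nu>1" "\<nu>1 \<le> 1" "0 \<le> \<nu>2" "\<nu>2 \<le> 1"
    using a0 b0 by (auto simp: init_law_def)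
  have tr: "0 \<le> trans_prob a b u e" "trans_prob a b u e \<le> 1" for u e
    using a0 b0 a1 b1 by (auto simp: trans_prob_def)
  let ?X = "\<lambda>u e v. trans_prob a b u e * (2 * (g u e - c) * DD n u + (g u e - c)\<^sup>2 * v)"
  have eq: "TT (Suc n) = TT n + (?X E1 E1 \<nu>1 + ?X E1 E2 \<nu>1 + ?X E2 E1 \<nu>2 + ?X E2 E2 \<nu>2)"
    unfolding TT_def VV_Suc by (simp add: trans_prob_def algebra_simps)
  have "?X E1 E1 \<nu>1 + ?X E1 E2 \<nu>1 + ?X E2 E1 \<nu>2 + ?X E2 E2 \<nu>2 \<le> KV"
  proof -
    have t1: "?X E1 E1 \<nu>1 \<le> 2 * \<bar>g E1 E1 - c\<bar> * Dbound + (g E1 E1 - c)\<^sup>2"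
      by (rule term_bound[OF tr(1) tr(2) nu(1) nu(2) DD_bound])
    have t2: "?X E1 E2 \<nu>1 \<le> 2 * \<bar>g E1 E2 - c\<bar> * Dbound + (g E1 E2 - c)\<^sup>2"
      by (rule term_bound[OF tr(1) tr(2) nu(1) nu(2) DD_bound])
    have t3: "?X E2 E1 \<nu>2 \<le> 2 * \<bar>g E2 E1 - c\<bar> * Dbound + (g E2 E1 - c)\<^sup>2"
      by (rule term_bound[OF tr(1) tr(2) nu(3) nu(4) DD_bound])
    have t4: "?X E2 E2 \<nu>2 \<le> 2 * \<bar>g E2 E2 - c\<bar> * Dbound + (g E2 E2 - c)\<^sup>2"
      by (rule term_bound[OF tr(1) tr(2) nu(3) nu(4) DD_bound])
    show ?thesis unfolding KV_def sum_env using t1 t2 t3 t4 by linarith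
  qed
  then show ?case using eq Suc.IH by (simp add: algebra_simps)
qed

lemma ZZ_sq_total: "ZZ a b n (\<lambda>x. (FF g n x - real n * c)\<^sup>2) = TT n"
  unfolding TT_def VV_def by (subst ZZ_split) (intro arg_cong2[where f="(+)"] ZZ_cong; simp)

lemma cheb:
  assumes "0 < n" "0 < \<epsilon>"
  shows "ZZ a b n (\<lambda>x. if real n * \<epsilon> \<le> \<bar>FF g n x - real n * c\<bar> then 1 else 0) \<le> KV / (real n * \<epsilon>\<^sup>2)"
proof -
  have pos: "0 < real n * \<epsilon>" using assms by simp
  have "ZZ a b n (\<lambda>x. if real n * \<epsilon> \<le> \<bar>FF g n x - real n * c\<bar> then 1 else 0)
      \<le> ZZ a b n (\<lambda>x. inverse ((real n * \<epsilon>)\<^sup>2) * (FF g n x - real n * c)\<^sup>2)"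
  proof (rule ZZ_mono[OF less_imp_le[OF a0] a1 b0 b1])
    fix x
    show "(if real n * \<epsilon> \<le> \<bar>FF g n x - real n * c\<bar> then 1 else 0)
        \<le> inverse ((real n * \<epsilon>)\<^sup>2) * (FF g n x - real n * c)\<^sup>2"
    proof (cases "real n * \<epsilon> \<le> \<bar>FF g n x - real n * c\<bar>")
      case True
      then have "(real n * \<epsilon>)\<^sup>2 \<le> (FF g n x - real n * c)\<^sup>2"
        using pos by (metis abs_le_square_iff abs_of_pos)
      have q: "0 < (real n * \<epsilon>)\<^sup>2" by (rule zero_less_power[OF pos])
      have "(1::real) = inverse ((real n * \<epsilon>)\<^sup>2) * (real n * \<epsilon>)\<^sup>2" using q by simp
      also have "\<dots> \<le> inverse ((real n * \<epsilon>)\<^sup>2) * (FF g n x - real n * c)\<^sup>2"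
        by (rule mult_left_mono) (use \<open>(real n * \<epsilon>)\<^sup>2 \<le> _\<close> q in auto)
      finally show ?thesis using True by simp
    qed simp
  qed
  also have "\<dots> = TT n / (real n * \<epsilon>)\<^sup>2"
    by (simp only: ZZ_cmult ZZ_sq_total) (simp add: divide_inverse mult.commute)
  also have "\<dots> \<le> KV * real n / (real n * \<epsilon>)\<^sup>2"
    using TT_bound pos by (simp add: divide_right_mono)
  also have "\<dots> = KV / (real n * \<epsilon>\<^sup>2)"
    using assms by (simp add: power2_eq_square field_simps)
  finally show ?thesis .
qed

end


lemma FF_restrict: "FF g n (restrict x {..n}) = FF g n x"
  unfolding FF_def by (intro sum.cong) auto

lemma prob_RR:
  assumes P: "prob_space M" and ch: "stationary_env_chain M w a b"
  shows "{\<omega>\<in>space M. Q (restrict (\<lambda>i. w i \<omega>) {..n})} \<in> sets M \<and>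
         measure M {\<omega>\<in>space M. Q (restrict (\<lambda>i. w i \<omega>) {..n})} = ZZ a b n (\<lambda>xs. if Q xs then 1 else 0)"
proof -
  interpret prob_space M by (rule P)
  have meas: "w i \<in> measurable M (count_space UNIV)" for i
    using ch unfolding stationary_env_chain_def by blast
  have cw_eq: "measure M {\<omega>\<in>space M. \<forall>i\<le>n. w i \<omega> = xs i} = cw a b n xs" for xs
    using ch unfolding stationary_env_chain_def cw_def by blast
  define cyl where "cyl xs = {\<omega>\<in>space M. \<forall>i\<in>{..n}. w i \<omega> = xs i}" for xs
  have single: "{\<omega>\<in>space M. w i \<omega> = e} \<in> sets M" for i e
  proof -
    have "{\<omega>\<in>space M. w i \<omega> = e} = w i -` {e} \<inter> space M" by auto
    also have "\<dots> \<in> sets M" using measurable_sets[OF meas, of "{e}"] by simp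
    finally show ?thesis .
  qed
  have cyl_sets: "cyl xs \<in> sets M" for xs
    unfolding cyl_def by (rule sets.sets_Collect_finite_All) (use single in auto)
  define S where "S = {xs\<in>RR n. Q xs}"
  have finS: "finite S" unfolding S_def using finite_RR by simp
  have eq: "{\<omega>\<in>space M. Q (restrict (\<lambda>i. w i \<omega>) {..n})} = (\<Union>xs\<in>S. cyl xs)"
  proof (intro set_eqI iffI)
    fix \<omega> assume "\<omega> \<in> {\<omega>\<in>space M. Q (restrict (\<lambda>i. w i \<omega>) {..n})}"
    then have "restrict (\<lambda>i. w i \<omega>) {..n} \<in> S" "\<omega> \<in> cyl (restrict (\<lambda>i. w i \<omega>) {..n})"
      unfolding S_def cyl_def RR_def by auto
    then show "\<omega> \<in> (\<Union>xs\<in>S. cyl xs)" by blast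
  next
    fix \<omega> assume "\<omega> \<in> (\<Union>xs\<in>S. cyl xs)"
    then obtain xs where xs: "xs \<in> S" "\<omega> \<in> cyl xs" by blast
    have "restrict (\<lambda>i. w i \<omega>) {..n} = xs"
      by (rule PiE_ext[of _ "{..n}" "\<lambda>_. UNIV"]) (use xs in \<open>auto simp: S_def RR_def cyl_def\<close>)
    then show "\<omega> \<in> {\<omega>\<in>space M. Q (restrict (\<lambda>i. w i \<omega>) {..n})}"
      using xs unfolding S_def cyl_def by auto
  qed
  have disj: "disjoint_family_on cyl S"
  unfolding disjoint_family_on_def proof (intro ballI impI)
    fix xs ys assume xs: "xs \<in> S" and ys: "ys \<in> S" and ne: "xs \<noteq> ys"
    show "cyl xs \<inter> cyl ys = {}"
    proof (rule ccontr)
      assume "cyl xs \<inter> cyl ys \<noteq> {}"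
      then obtain \<omega> where "\<omega> \<in> cyl xs" "\<omega> \<in> cyl ys" by blast
      then have "xs = ys"
        by (intro PiE_ext[of _ "{..n}" "\<lambda>_. UNIV"]) (use xs ys in \<open>auto simp: S_def RR_def cyl_def\<close>)
      with ne show False by simp
    qed
  qed
  have "measure M (\<Union>xs\<in>S. cyl xs) = (\<Sum>xs\<in>S. measure M (cyl xs))"
    by (rule measure_finite_Union[OF finS]) (use cyl_sets disj emeasure_finite in auto)
  also have "\<dots> = (\<Sum>xs\<in>S. cw a b n xs)"
  proof (intro sum.cong refl)
    fix xs
    have "cyl xs = {\<omega>\<in>space M. \<forall>i\<le>n. w i \<omega> = xs i}" unfolding cyl_def by auto
    then show "measure M (cyl xs) = cw a b n xs" using cw_eq by simp
  qed
  also have "\<dots> = ZZ a b n (\<lambda>xs. if Q xs then 1 else 0)"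
    unfolding S_def ZZ_def using finite_RR by (simp add: sum.inter_filter) (intro sum.cong; simp)
  finally show ?thesis unfolding eq using cyl_sets finS by auto
qed


lemma incr_bound:
  fixes f :: "nat \<Rightarrow> real"
  assumes inc: "\<And>n. \<bar>f (Suc n) - f n\<bar> \<le> G"
  shows "\<bar>f (m + d) - f m\<bar> \<le> G * real d"
proof (induction d)
  case 0 then show ?case by simp
next
  case (Suc d)
  have "\<bar>f (m + Suc d) - f m\<bar> \<le> \<bar>f (Suc (m + d)) - f (m + d)\<bar> + \<bar>f (m + d) - f m\<bar>" by simp
  also have "\<dots> \<le> G + G * real d" using inc[of "m + d"] Suc.IH by linarith
  finally show ?case by (simp add: algebra_simps)
qed

lemma sq_bracket: "1 \<le> (n::nat) \<Longrightarrow> \<exists>k. (k+1)\<^sup>2 \<le> n \<and> n < (k+2)\<^sup>2"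
proof (induction n rule: dec_induct)
  case base then show ?case by (intro exI[of _ 0]) (simp add: power2_eq_square)
next
  case (step n)
  then obtain k where k: "(k+1)\<^sup>2 \<le> n" "n < (k+2)\<^sup>2" by blast
  show ?case
  proof (cases "Suc n < (k+2)\<^sup>2")
    case True then show ?thesis using k by (intro exI[of _ k]) simp
  next
    case False
    then have "Suc n = (k+2)\<^sup>2" using k by simp
    moreover have "(k+2)\<^sup>2 < (k+3)\<^sup>2" by (simp add: power_strict_mono)
    ultimately show ?thesis by (intro exI[of _ "k+1"]) (simp add: numeral_eq_Suc)
  qed
qed

lemma interp:
  fixes f :: "nat \<Rightarrow> real"
  assumes inc: "\<And>n. \<bar>f (Suc n) - f n\<bar> \<le> G"
    and sub: "\<And>j. \<exists>K. \<forall>k\<ge>K. \<bar>f ((k+1)\<^sup>2)\<bar> < real ((k+1)\<^sup>2) / real (Suc j)"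
    and \<delta>: "0 < \<delta>"
  shows "\<exists>N. \<forall>n\<ge>N. - \<delta> * real n \<le> f n"
proof -
  have G0: "0 \<le> G" using inc[of 0] by linarith
  obtain j where j: "inverse (real (Suc j)) < \<delta> / 2"
    using ex_inverse_of_nat_less[of "\<delta>/2"] \<delta> by (metis gr0_implies_Suc half_gt_zero)
  obtain K where K: "\<forall>k\<ge>K. \<bar>f ((k+1)\<^sup>2)\<bar> < real ((k+1)\<^sup>2) / real (Suc j)" using sub by blast
  define K' where "K' = max K (nat \<lceil>4 * G / \<delta>\<rceil>)"
  show ?thesis
  proof (intro exI[of _ "(K'+2)\<^sup>2"] allI impI)
    fix n assume n: "(K'+2)\<^sup>2 \<le> n"
    have "(1::nat) \<le> (K'+2)\<^sup>2" by (simp add: power2_eq_square)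
    then have "1 \<le> n" using n by linarith
    then obtain k where k: "(k+1)\<^sup>2 \<le> n" "n < (k+2)\<^sup>2" using sq_bracket by blast
    have "(K'+2)\<^sup>2 < (k+2)\<^sup>2" using n k by linarith
    then have "K' + 2 < k + 2" using power_less_imp_less_base by blast
    then have kK': "K' \<le> k" by simp
    then have kK: "K \<le> k" unfolding K'_def by simp
    have "nat \<lceil>4 * G / \<delta>\<rceil> \<le> K'" unfolding K'_def by (rule max.cobounded2)
    then have kG: "real (nat \<lceil>4 * G / \<delta>\<rceil>) \<le> real k" using kK' by (simp only: of_nat_le_iff)
    define r where "r = real (k+1)"
    have r0: "0 < r" unfolding r_def by simp
    have rn: "r\<^sup>2 \<le> real n" unfolding r_def using k(1) by (metis of_nat_le_iff of_nat_power)
    have "4 * G / \<delta> \<le> real (nat \<lceil>4 * G / \<delta>\<rceil>)" by (rule real_nat_ceiling_ge)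
    also have "\<dots> \<le> real k" by (rule kG)
    finally have "4 * G / \<delta> \<le> real k" .
    then have "4 * G \<le> \<delta> * real k" using \<delta> by (simp add: divide_le_eq mult.commute)
    then have rG: "4 * G \<le> \<delta> * r" unfolding r_def using \<delta> by (simp add: algebra_simps)
    have d: "n - (k+1)\<^sup>2 \<le> 2 * k + 2"
      using k by (simp add: power2_eq_square algebra_simps)
    have e: "(k+1)\<^sup>2 + (n - (k+1)\<^sup>2) = n" using k by simp
    have "\<bar>f n - f ((k+1)\<^sup>2)\<bar> \<le> G * real (n - (k+1)\<^sup>2)"
      using incr_bound[where f=f and G=G and m="(k+1)\<^sup>2" and d="n - (k+1)\<^sup>2", OF inc] unfolding e .
    moreover have "G * real (n - (k+1)\<^sup>2) \<le> G * (2 * r)"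
    proof -
      have "real (n - (k+1)\<^sup>2) \<le> real (2*k+2)" using d by (simp only: of_nat_le_iff)
      then have "real (n - (k+1)\<^sup>2) \<le> 2 * r" unfolding r_def by simp
      then show ?thesis by (rule mult_left_mono[OF _ G0])
    qed
    ultimately have f1: "f n \<ge> f ((k+1)\<^sup>2) - G * (2 * r)" by linarith
    have "\<bar>f ((k+1)\<^sup>2)\<bar> < r\<^sup>2 / real (Suc j)" using K kK unfolding r_def by simp
    also have "\<dots> = r\<^sup>2 * inverse (real (Suc j))" by (simp add: divide_inverse)
    also have "\<dots> \<le> r\<^sup>2 * (\<delta> / 2)" using j by (intro mult_left_mono) auto
    finally have f2: "f ((k+1)\<^sup>2) > - (r\<^sup>2 * (\<delta> / 2))" by linarith
    have "G * (2 * r) \<le> (\<delta> * r) * r / 2" using rG r0 by (simp add: mult_right_mono)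
    then have f3: "G * (2 * r) \<le> r\<^sup>2 * (\<delta> / 2)" by (simp add: power2_eq_square algebra_simps)
    have "r\<^sup>2 * (\<delta> / 2) \<le> real n * (\<delta> / 2)" using rn \<delta> by (intro mult_right_mono) auto
    moreover have "real n * (\<delta> / 2) = (\<delta> * real n) / 2" by simp
    ultimately show "- \<delta> * real n \<le> f n" using f1 f2 f3 by linarith
  qed
qed


fun pt :: "env \<Rightarrow> 2" where "pt E1 = 1" | "pt E2 = 2"

definition gg :: "(env \<Rightarrow> 2 \<Rightarrow> real) \<Rightarrow> real \<Rightarrow> real \<Rightarrow> env \<Rightarrow> env \<Rightarrow> real" where
  "gg m p q u e = ln (Amat m p q e $ pt e $ pt u)"

lemma Amat_pos:
  assumes "\<And>s i. 0 < m s i" "0 < p" "p < 1" "0 < q" "q < 1"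
  shows "0 < Amat m p q s $ i $ j"
  using assms(1)[of s i] assms(2-5) unfolding Amat_def dmat_def by simp

lemma prodA_nonneg:
  assumes "\<And>s i. 0 < m s i" "0 < p" "p < 1" "0 < q" "q < 1"
  shows "0 \<le> prodA m p q x n $ i $ j"
proof (induction n arbitrary: i j)
  case 0 then show ?case using Amat_pos[OF assms] by (simp add: less_imp_le)
next
  case (Suc n)
  show ?case unfolding prodA.simps matrix_matrix_mult_def
    using Suc.IH Amat_pos[OF assms] by (simp add: sum_nonneg less_imp_le)
qed

lemma prodA_path:
  assumes pos: "\<And>s i. 0 < m s i" "0 < p" "p < 1" "0 < q" "q < 1"
  shows "Amat m p q (x 0) $ pt (x 0) $ pt (x 0) * (\<Prod>t<n. Amat m p q (x (Suc t)) $ pt (x (Suc t)) $ pt (x t))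
     \<le> prodA m p q x n $ pt (x n) $ pt (x 0)"
proof (induction n)
  case 0 then show ?case by simp
next
  case (Suc n)
  let ?A = "Amat m p q (x (Suc n))"
  have "Amat m p q (x 0) $ pt (x 0) $ pt (x 0) * (\<Prod>t<Suc n. Amat m p q (x (Suc t)) $ pt (x (Suc t)) $ pt (x t))
      = ?A $ pt (x (Suc n)) $ pt (x n) * (Amat m p q (x 0) $ pt (x 0) $ pt (x 0) * (\<Prod>t<n. Amat m p q (x (Suc t)) $ pt (x (Suc t)) $ pt (x t)))"
    by (simp add: prod.lessThan_Suc mult_ac)
  also have "\<dots> \<le> ?A $ pt (x (Suc n)) $ pt (x n) * prodA m p q x n $ pt (x n) $ pt (x 0)"
    by (rule mult_left_mono[OF Suc.IH less_imp_le[OF Amat_pos[OF pos]]])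
  also have "\<dots> \<le> (\<Sum>k\<in>UNIV. ?A $ pt (x (Suc n)) $ k * prodA m p q x n $ k $ pt (x 0))"
    by (rule member_le_sum[where f="\<lambda>k. ?A $ pt (x (Suc n)) $ k * prodA m p q x n $ k $ pt (x 0)"])
       (auto intro!: mult_nonneg_nonneg prodA_nonneg[OF pos] less_imp_le[OF Amat_pos[OF pos]])
  also have "\<dots> = prodA m p q x (Suc n) $ pt (x (Suc n)) $ pt (x 0)"
    by (simp add: matrix_matrix_mult_def)
  finally show ?case .
qed

lemma rownorm_ge: "\<bar>B $ i $ j\<bar> \<le> rownorm B"
proof -
  have "\<bar>B $ i $ j\<bar> \<le> (\<Sum>j\<in>UNIV. \<bar>B $ i $ j\<bar>)" by (rule member_le_sum) auto
  also have "\<dots> \<le> rownorm B" unfolding rownorm_def by (rule Max_ge) auto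
  finally show ?thesis .
qed

lemma ln_rownorm:
  assumes pos: "\<And>s i. 0 < m s i" "0 < p" "p < 1" "0 < q" "q < 1"
  shows "ln (Amat m p q (x 0) $ pt (x 0) $ pt (x 0)) + FF (gg m p q) n x \<le> ln (rownorm (prodA m p q x n))"
proof -
  let ?P = "Amat m p q (x 0) $ pt (x 0) $ pt (x 0) * (\<Prod>t<n. Amat m p q (x (Suc t)) $ pt (x (Suc t)) $ pt (x t))"
  have P0: "0 < ?P" using Amat_pos[OF pos] by (intro mult_pos_pos prod_pos) auto
  have "ln ?P = ln (Amat m p q (x 0) $ pt (x 0) $ pt (x 0)) + FF (gg m p q) n x"
    unfolding FF_def gg_def using Amat_pos[OF pos]
    by (subst ln_mult) (auto intro!: prod_pos simp: ln_prod less_imp_neq[symmetric])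
  moreover have "?P \<le> rownorm (prodA m p q x n)"
    using prodA_path[where m=m and p=p and q=q and x=x and n=n, OF pos] rownorm_ge[of "prodA m p q x n" "pt (x n)" "pt (x 0)"] by linarith
  then have "ln ?P \<le> ln (rownorm (prodA m p q x n))" using P0 by (rule ln_mono)
  ultimately show ?thesis by simp
qed


lemma cval:
  fixes m :: "env \<Rightarrow> 2 \<Rightarrow> real" and p q \<alpha> \<beta> :: real
  assumes pos: "\<And>s i. 0 < m s i" and p: "0 < p" "p < 1" and q: "0 < q" "q < 1"
    and ab: "0 < \<alpha>" "0 < \<beta>"
  shows "(\<Sum>u\<in>UNIV. \<Sum>e\<in>UNIV. init_law \<alpha> \<beta> u * trans_prob \<alpha> \<beta> u e * gg m p q u e) =
     (let \<nu> = \<beta> / (\<alpha> + \<beta>) in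
          \<nu> * ln (m E1 1) + (1 - \<nu>) * ln (m E2 2) + \<nu> * \<alpha> * ln (p * q)
          + \<nu> * (1 - \<alpha>) * ln (1 - p) + (1 - \<nu>) * (1 - \<beta>) * ln (1 - q))"
proof -
  define nu where "nu = \<beta> / (\<alpha> + \<beta>)"
  have ne: "\<alpha> + \<beta> \<noteq> 0" using ab by simp
  have i1: "init_law \<alpha> \<beta> E1 = nu" unfolding nu_def init_law_def by simp
  have i2: "init_law \<alpha> \<beta> E2 = 1 - nu" unfolding nu_def init_law_def using ne
    by (simp add: field_simps)
  have key: "(1 - nu) * \<beta> = nu * \<alpha>" unfolding nu_def using ne by (simp add: field_simps)
  have m1: "0 < m E1 1" and m2: "0 < m E2 2" using pos by auto
  have g11: "gg m p q E1 E1 = ln (m E1 1) + ln (1 - p)"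
    unfolding gg_def Amat_def dmat_def using m1 p by (simp add: ln_mult)
  have g12: "gg m p q E1 E2 = ln (m E2 2) + ln q"
    unfolding gg_def Amat_def dmat_def using m2 q by (simp add: ln_mult)
  have g21: "gg m p q E2 E1 = ln (m E1 1) + ln p"
    unfolding gg_def Amat_def dmat_def using m1 p by (simp add: ln_mult)
  have g22: "gg m p q E2 E2 = ln (m E2 2) + ln (1 - q)"
    unfolding gg_def Amat_def dmat_def using m2 q by (simp add: ln_mult)
  have lpq: "ln (p * q) = ln p + ln q" using p q by (simp add: ln_mult)
  show ?thesis
    unfolding sum_env i1 i2 g11 g12 g21 g22 Let_def nu_def[symmetric] lpq
    unfolding trans_prob_def
    using key by simp algebra
qed


theorem proposition5p4:
  fixes M :: "'a measure" and w :: "nat \<Rightarrow> 'a \<Rightarrow> env"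
    and m :: "env \<Rightarrow> 2 \<Rightarrow> real" and p q \<alpha> \<beta> :: real
  assumes "prob_space M"
    and "0 < p" "p < 1" "0 < q" "q < 1"
    and "0 < \<alpha>" "\<alpha> \<le> 1" "0 < \<beta>" "\<beta> \<le> 1"
    and "\<And>s i. 0 < m s i"
    and "stationary_env_chain M w \<alpha> \<beta>"
  shows "AE \<omega> in M.
     liminf (\<lambda>n. ereal (ln (rownorm (prodA m p q (\<lambda>k. w k \<omega>) n)) / real n))
     \<ge> ereal (let \<nu> = \<beta> / (\<alpha> + \<beta>) in
          \<nu> * ln (m E1 1) + (1 - \<nu>) * ln (m E2 2) + \<nu> * \<alpha> * ln (p * q)
          + \<nu> * (1 - \<alpha>) * ln (1 - p) + (1 - \<nu>) * (1 - \<beta>) * ln (1 - q))"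
proof -
  note pos = assms(10) assms(2-5)
  interpret P: prob_space M by (rule assms(1))
  define g where "g = gg m p q"
  define c where "c = (\<Sum>u\<in>UNIV. \<Sum>e\<in>UNIV. init_law \<alpha> \<beta> u * trans_prob \<alpha> \<beta> u e * g u e)"
  interpret mc \<alpha> \<beta> g c
    using assms(6-9) by unfold_locales (auto simp: c_def)
  have cv: "(let \<nu> = \<beta> / (\<alpha> + \<beta>) in
          \<nu> * ln (m E1 1) + (1 - \<nu>) * ln (m E2 2) + \<nu> * \<alpha> * ln (p * q)
          + \<nu> * (1 - \<alpha>) * ln (1 - p) + (1 - \<nu>) * (1 - \<beta>) * ln (1 - q)) = c"
    unfolding c_def g_def using cval[OF assms(10) assms(2-5) assms(6) assms(8)] by simp
  define A where "A j k = {\<omega>\<in>space M. real ((k+1)\<^sup>2) * (1 / real (Suc j))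
        \<le> \<bar>FF g ((k+1)\<^sup>2) (restrict (\<lambda>i. w i \<omega>) {..(k+1)\<^sup>2}) - real ((k+1)\<^sup>2) * c\<bar>}" for j k :: nat
  have AS: "A j k \<in> sets M" and AM: "measure M (A j k) \<le> KV * (real (Suc j))\<^sup>2 * inverse (real (Suc k) ^ 2)" for j k
  proof -
    note pr = prob_RR[OF assms(1) assms(11), where n="(k+1)\<^sup>2" and
      Q="\<lambda>xs. real ((k+1)\<^sup>2) * (1 / real (Suc j)) \<le> \<bar>FF g ((k+1)\<^sup>2) xs - real ((k+1)\<^sup>2) * c\<bar>"]
    show "A j k \<in> sets M" unfolding A_def by (rule conjunct1[OF pr])
    have "measure M (A j k) = ZZ \<alpha> \<beta> ((k+1)\<^sup>2) (\<lambda>xs. if real ((k+1)\<^sup>2) * (1 / real (Suc j)) \<le> \<bar>FF g ((k+1)\<^sup>2) xs - real ((k+1)\<^sup>2) * c\<bar> then 1 else 0)"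
      unfolding A_def by (rule conjunct2[OF pr])
    also have "\<dots> \<le> KV / (real ((k+1)\<^sup>2) * (1 / real (Suc j))\<^sup>2)"
      by (rule cheb) simp_all
    also have "\<dots> = KV * (real (Suc j))\<^sup>2 * inverse (real (Suc k) ^ 2)"
      by (simp add: divide_inverse power_one_over power_inverse mult_ac)
    finally show "measure M (A j k) \<le> KV * (real (Suc j))\<^sup>2 * inverse (real (Suc k) ^ 2)" .
  qed
  have summ: "summable (\<lambda>k. KV * (real (Suc j))\<^sup>2 * inverse (real (Suc k) ^ 2))" for j
  proof -
    have "summable (\<lambda>k. inverse (real k ^ 2))" by (rule inverse_power_summable) simp
    then have "summable (\<lambda>k. inverse (real (Suc k) ^ 2))" by (subst summable_Suc_iff)
    then show ?thesis by (rule summable_mult)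
  qed
  have BC: "AE \<omega> in M. eventually (\<lambda>k. \<omega> \<in> space M - A j k) sequentially" for j
  proof (rule borel_cantelli_AE1)
    show "A j k \<in> sets M" for k by (rule AS)
    show "emeasure M (A j k) < \<infinity>" for k using P.emeasure_finite[of "A j k"] by (simp add: less_top[symmetric])
    show "summable (\<lambda>k. measure M (A j k))"
    proof (rule summable_comparison_test'[OF summ[of j]])
      fix k :: nat
      show "norm (measure M (A j k)) \<le> KV * (real (Suc j))\<^sup>2 * inverse (real (Suc k) ^ 2)"
        using AM[of j k] by simp
    qed
  qed
  have AEall: "AE \<omega> in M. \<forall>j. eventually (\<lambda>k. \<omega> \<in> space M - A j k) sequentially"
    using BC by (subst AE_all_countable) blast
  show ?thesis
  proof (rule AE_mp[OF AEall], rule AE_I2, intro impI)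
    fix \<omega> assume \<omega>: "\<omega> \<in> space M" and ev: "\<forall>j. eventually (\<lambda>k. \<omega> \<in> space M - A j k) sequentially"
    define x where "x = (\<lambda>i. w i \<omega>)"
    define f where "f n = FF g n x - real n * c" for n
    define G where "G = (\<Sum>u\<in>UNIV. \<Sum>e\<in>UNIV. \<bar>g u e - c\<bar>)"
    have inc: "\<bar>f (Suc n) - f n\<bar> \<le> G" for n
    proof -
      have "f (Suc n) - f n = g (x n) (x (Suc n)) - c" unfolding f_def FF_def by (simp add: algebra_simps)
      moreover have "\<bar>g u e - c\<bar> \<le> G" for u e
      proof -
        have s1: "\<bar>g u e - c\<bar> \<le> (\<Sum>e\<in>UNIV. \<bar>g u e - c\<bar>)" by (rule member_le_sum) auto
        also have "\<dots> \<le> G" unfolding G_def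
          by (rule member_le_sum[where f="\<lambda>u. \<Sum>e\<in>UNIV. \<bar>g u e - c\<bar>"]) (auto intro: sum_nonneg)
        finally show ?thesis .
      qed
      ultimately show ?thesis by simp
    qed
    have sub: "\<exists>K. \<forall>k\<ge>K. \<bar>f ((k+1)\<^sup>2)\<bar> < real ((k+1)\<^sup>2) / real (Suc j)" for j
    proof -
      have "eventually (\<lambda>k. \<omega> \<in> space M - A j k) sequentially" using ev by (rule spec)
      then obtain K where K: "\<And>k. K \<le> k \<Longrightarrow> \<omega> \<in> space M - A j k"
        unfolding eventually_sequentially by blast
      show ?thesis
      proof (intro exI[of _ K] allI impI)
        fix k assume "K \<le> k"
        then have "\<omega> \<notin> A j k" using K by blast
        then have nle: "\<not> real ((k+1)\<^sup>2) * (1 / real (Suc j))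
           \<le> \<bar>FF g ((k+1)\<^sup>2) (restrict (\<lambda>i. w i \<omega>) {..(k+1)\<^sup>2}) - real ((k+1)\<^sup>2) * c\<bar>"
          using \<omega> unfolding A_def by (simp only: mem_Collect_eq simp_thms)
        have e1: "FF g ((k+1)\<^sup>2) (restrict (\<lambda>i. w i \<omega>) {..(k+1)\<^sup>2}) = FF g ((k+1)\<^sup>2) x"
          unfolding x_def by (rule FF_restrict)
        have e2: "real ((k+1)\<^sup>2) * (1 / real (Suc j)) = real ((k+1)\<^sup>2) / real (Suc j)" by simp
        have e3: "f ((k+1)\<^sup>2) = FF g ((k+1)\<^sup>2) x - real ((k+1)\<^sup>2) * c" unfolding f_def ..
        show "\<bar>f ((k+1)\<^sup>2)\<bar> < real ((k+1)\<^sup>2) / real (Suc j)"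
          using nle unfolding e1 e2 e3[symmetric] by linarith
      qed
    qed
    define L where "L = \<bar>ln (Amat m p q E1 $ 1 $ 1)\<bar> + \<bar>ln (Amat m p q E2 $ 2 $ 2)\<bar>"
    have lnb: "- L + FF g n x \<le> ln (rownorm (prodA m p q x n))" for n
    proof -
      have "- L \<le> ln (Amat m p q (x 0) $ pt (x 0) $ pt (x 0))"
        unfolding L_def by (cases "x 0") simp_all
      then show ?thesis using ln_rownorm[where m=m and p=p and q=q and x=x and n=n, OF pos] unfolding g_def by linarith
    qed
    show "ereal (let \<nu> = \<beta> / (\<alpha> + \<beta>) in
          \<nu> * ln (m E1 1) + (1 - \<nu>) * ln (m E2 2) + \<nu> * \<alpha> * ln (p * q)
          + \<nu> * (1 - \<alpha>) * ln (1 - p) + (1 - \<nu>) * (1 - \<beta>) * ln (1 - q))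
      \<le> liminf (\<lambda>n. ereal (ln (rownorm (prodA m p q (\<lambda>k. w k \<omega>) n)) / real n))"
      unfolding cv le_Liminf_iff x_def[symmetric]
    proof (intro allI impI)
      fix y assume y: "y < ereal c"
      show "\<forall>\<^sub>F n in sequentially. y < ereal (ln (rownorm (prodA m p q x n)) / real n)"
      proof (cases y)
        case (real r)
        then have rc: "r < c" using y by simp
        define \<delta> where "\<delta> = (c - r) / 3"
        have d0: "0 < \<delta>" unfolding \<delta>_def using rc by simp
        obtain N1 where N1: "\<forall>n\<ge>N1. - \<delta> * real n \<le> f n"
          using interp[where f=f and G=G, OF inc sub d0] by blast
        define N2 where "N2 = nat \<lceil>L / \<delta>\<rceil> + 1"
        show ?thesis unfolding eventually_sequentially
        proof (intro exI[of _ "max N1 N2"] allI impI)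
          fix n assume n: "max N1 N2 \<le> n"
          have n0: "0 < real n" using n unfolding N2_def by simp
          have "L / \<delta> \<le> real (nat \<lceil>L / \<delta>\<rceil>)" by (rule real_nat_ceiling_ge)
          also have "\<dots> < real n" using n unfolding N2_def by simp
          finally have "L < \<delta> * real n" using d0 by (simp add: divide_less_eq mult.commute)
          moreover have "- \<delta> * real n \<le> FF g n x - real n * c" using N1 n unfolding f_def by simp
          ultimately have "(r + \<delta>) * real n < ln (rownorm (prodA m p q x n))"
          proof -
            have h1: "(r + \<delta>) * real n = r * real n + \<delta> * real n" by (simp add: algebra_simps)
            have h2: "3 * (\<delta> * real n) = c * real n - r * real n" unfolding \<delta>_def by (simp add: field_simps)
            have h3: "real n * c = c * real n" by simp
            show ?thesis using lnb[of n] h1 h2 h3 \<open>L < \<delta> * real n\<close> \<open>- \<delta> * real n \<le> FF g n x - real n * c\<close> by linarith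
          qed
          then have "r + \<delta> < ln (rownorm (prodA m p q x n)) / real n"
            using n0 by (simp add: less_divide_eq)
          then show "y < ereal (ln (rownorm (prodA m p q x n)) / real n)"
            using real d0 by simp
        qed
      qed (use y in auto)
    qed
  qed
qed

end
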